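(* Let $\varphi$ be an optimal (expected-revenue-maximizing) mixed signaling scheme and let $S$ be a signal of $\varphi$ that is not singleton-splittable, i.e. $\mathrm{rev}(S)>\sum_{j\in S}\varphi_{j,S}\,\mathrm{rev}(j)$. Then both $w_1(S)$ and $w_2(S)$ belong to the set $\{w_1(j): j\in S\}$.
   Context: Setting: $n\ge 2$ bidders, $m$ item types with probabilities $p_j$, nonnegative valuations $v_{i,j}$; $\psi_{i,j}=p_jv_{i,j}$. A mixed signaling scheme is a finite signal set $\mathcal{S}$ and $\varphi:[m]\times\mathcal{S}\to[0,1]$ with $\sum_S\varphi(j,S)=1$ for each $j$; $\varphi_{j,S}=\varphi(j,S)$; a signal is identified with its support $\{j:\varphi_{j,S}>0\}$, so $j\in S$ means $\varphi_{j,S}>0$. Its expected revenue is $\sum_S\mathrm{max2}_i\{\sum_j\psi_{i,j}\varphi_{j,S}\}$ ($\mathrm{max2}$ = second-largest entry with multiplicity). Ties are broken by a fixed priority order on bidders. $w_1(S)$ is the bidder maximizing $\sum_j\psi_{i,j}\varphi_{j,S}$ and $w_2(S)$ the maximizer among $i\ne w_1(S)$; $\mathrm{rev}(S)=\sum_j\varphi_{j,S}\psi_{w_2(S),j}$. For a single type $j$, $w_1(j)$ is the bidder maximizing $\psi_{i,j}$, $w_2(j)$ the maximizer among the others, and $\mathrm{rev}(j)=\psi_{w_2(j),j}=\mathrm{max2}_i\psi_{i,j}$. *)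

theory Defs
  imports Complex_Main
begin

(* Bidders are 0..<n, item types are 0..<m, signals are labels of type nat.
   prio :: nat => nat is the fixed priority order on bidders (injective on bidders);
   a smaller prio value means higher priority in tie-breaking. *)

definition psi :: "(nat \<Rightarrow> real) \<Rightarrow> (nat \<Rightarrow> nat \<Rightarrow> real) \<Rightarrow> nat \<Rightarrow> nat \<Rightarrow> real" where
  "psi p v i j = p j * v i j"

definition top :: "(nat \<Rightarrow> nat) \<Rightarrow> (nat \<Rightarrow> real) \<Rightarrow> nat set \<Rightarrow> nat" where
  "top prio f A = (THE i. i \<in> A \<and> (\<forall>k\<in>A - {i}. f k < f i \<or> (f k = f i \<and> prio i < prio k)))"

definition sigval :: "nat \<Rightarrow> (nat \<Rightarrow> real) \<Rightarrow> (nat \<Rightarrow> nat \<Rightarrow> real) \<Rightarrow> (nat \<Rightarrow> nat \<Rightarrow> real) \<Rightarrow> nat \<Rightarrow> nat \<Rightarrow> real" where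
  "sigval m p v \<phi> s i = (\<Sum>j<m. psi p v i j * \<phi> j s)"

definition w1 :: "nat \<Rightarrow> nat \<Rightarrow> (nat \<Rightarrow> nat) \<Rightarrow> (nat \<Rightarrow> real) \<Rightarrow> (nat \<Rightarrow> nat \<Rightarrow> real) \<Rightarrow> (nat \<Rightarrow> nat \<Rightarrow> real) \<Rightarrow> nat \<Rightarrow> nat" where
  "w1 n m prio p v \<phi> s = top prio (sigval m p v \<phi> s) {..<n}"

definition w2 :: "nat \<Rightarrow> nat \<Rightarrow> (nat \<Rightarrow> nat) \<Rightarrow> (nat \<Rightarrow> real) \<Rightarrow> (nat \<Rightarrow> nat \<Rightarrow> real) \<Rightarrow> (nat \<Rightarrow> nat \<Rightarrow> real) \<Rightarrow> nat \<Rightarrow> nat" where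
  "w2 n m prio p v \<phi> s = top prio (sigval m p v \<phi> s) ({..<n} - {w1 n m prio p v \<phi> s})"

(* rev(S) = sum_j phi_{j,S} psi_{w2(S),j}  (= max2 of the bidders' values) *)
definition rev_sig :: "nat \<Rightarrow> nat \<Rightarrow> (nat \<Rightarrow> nat) \<Rightarrow> (nat \<Rightarrow> real) \<Rightarrow> (nat \<Rightarrow> nat \<Rightarrow> real) \<Rightarrow> (nat \<Rightarrow> nat \<Rightarrow> real) \<Rightarrow> nat \<Rightarrow> real" where
  "rev_sig n m prio p v \<phi> s = (\<Sum>j<m. \<phi> j s * psi p v (w2 n m prio p v \<phi> s) j)"

definition w1_item :: "nat \<Rightarrow> (nat \<Rightarrow> nat) \<Rightarrow> (nat \<Rightarrow> real) \<Rightarrow> (nat \<Rightarrow> nat \<Rightarrow> real) \<Rightarrow> nat \<Rightarrow> nat" where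
  "w1_item n prio p v j = top prio (\<lambda>i. psi p v i j) {..<n}"

definition w2_item :: "nat \<Rightarrow> (nat \<Rightarrow> nat) \<Rightarrow> (nat \<Rightarrow> real) \<Rightarrow> (nat \<Rightarrow> nat \<Rightarrow> real) \<Rightarrow> nat \<Rightarrow> nat" where
  "w2_item n prio p v j = top prio (\<lambda>i. psi p v i j) ({..<n} - {w1_item n prio p v j})"

definition rev_item :: "nat \<Rightarrow> (nat \<Rightarrow> nat) \<Rightarrow> (nat \<Rightarrow> real) \<Rightarrow> (nat \<Rightarrow> nat \<Rightarrow> real) \<Rightarrow> nat \<Rightarrow> real" where
  "rev_item n prio p v j = psi p v (w2_item n prio p v j) j"

definition scheme :: "nat \<Rightarrow> nat set \<Rightarrow> (nat \<Rightarrow> nat \<Rightarrow> real) \<Rightarrow> bool" where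
  "scheme m Sig \<phi> \<longleftrightarrow> finite Sig \<and>
     (\<forall>j<m. \<forall>s\<in>Sig. 0 \<le> \<phi> j s \<and> \<phi> j s \<le> 1) \<and>
     (\<forall>j<m. (\<Sum>s\<in>Sig. \<phi> j s) = 1)"

definition supp :: "nat \<Rightarrow> (nat \<Rightarrow> nat \<Rightarrow> real) \<Rightarrow> nat \<Rightarrow> nat set" where
  "supp m \<phi> s = {j. j < m \<and> \<phi> j s > 0}"

definition revenue :: "nat \<Rightarrow> nat \<Rightarrow> (nat \<Rightarrow> nat) \<Rightarrow> (nat \<Rightarrow> real) \<Rightarrow> (nat \<Rightarrow> nat \<Rightarrow> real) \<Rightarrow> nat set \<Rightarrow> (nat \<Rightarrow> nat \<Rightarrow> real) \<Rightarrow> real" where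
  "revenue n m prio p v Sig \<phi> = (\<Sum>s\<in>Sig. sigval m p v \<phi> s (w2 n m prio p v \<phi> s))"

definition optimal :: "nat \<Rightarrow> nat \<Rightarrow> (nat \<Rightarrow> nat) \<Rightarrow> (nat \<Rightarrow> real) \<Rightarrow> (nat \<Rightarrow> nat \<Rightarrow> real) \<Rightarrow> nat set \<Rightarrow> (nat \<Rightarrow> nat \<Rightarrow> real) \<Rightarrow> bool" where
  "optimal n m prio p v Sig \<phi> \<longleftrightarrow> scheme m Sig \<phi> \<and>
     (\<forall>Sig' \<phi>'. scheme m Sig' \<phi>' \<longrightarrow> revenue n m prio p v Sig' \<phi>' \<le> revenue n m prio p v Sig \<phi>)"

end

theory Submission
  imports Defs
begin

lemma top_ex:
  fixes f :: "nat \<Rightarrow> real" and prio :: "nat \<Rightarrow> nat"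
  assumes "finite A" "A \<noteq> {}" "inj_on prio A"
  shows "\<exists>i. i \<in> A \<and> (\<forall>k\<in>A - {i}. f k < f i \<or> (f k = f i \<and> prio i < prio k))"
proof -
  define M where "M = Max (f ` A)"
  define B where "B = {i\<in>A. f i = M}"
  have "M \<in> f ` A" unfolding M_def using assms by auto
  hence Bne: "B \<noteq> {}" unfolding B_def by auto
  have Bf: "finite B" unfolding B_def using assms by auto
  have "Min (prio ` B) \<in> prio ` B" using Bne Bf by auto
  then obtain i where iB: "i \<in> B" and pi: "prio i = Min (prio ` B)" by auto
  show ?thesis
  proof (intro exI conjI ballI)
    show "i \<in> A" using iB B_def by auto
    fix k assume k: "k \<in> A - {i}"
    have "f k \<le> M" unfolding M_def using assms k by auto
    moreover have "f i = M" using iB B_def by auto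
    moreover have "f k = M \<Longrightarrow> prio i < prio k"
    proof -
      assume "f k = M"
      hence "k \<in> B" using k B_def by auto
      hence "prio i \<le> prio k" using pi Bf by auto
      moreover have "prio i \<noteq> prio k" using assms(3) k iB unfolding B_def inj_on_def by blast
      ultimately show ?thesis by auto
    qed
    ultimately show "f k < f i \<or> (f k = f i \<and> prio i < prio k)"
      by (cases "f k = M") auto
  qed
qed

lemma top_props:
  fixes f :: "nat \<Rightarrow> real" and prio :: "nat \<Rightarrow> nat"
  assumes "finite A" "A \<noteq> {}" "inj_on prio A"
  shows "top prio f A \<in> A \<and> (\<forall>k\<in>A. f k \<le> f (top prio f A))"
proof -
  let ?P = "\<lambda>i. i \<in> A \<and> (\<forall>k\<in>A - {i}. f k < f i \<or> (f k = f i \<and> prio i < prio k))"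
  obtain i where i: "?P i" using top_ex[OF assms, of f] by (elim exE)
  have u: "\<And>j. ?P j \<Longrightarrow> j = i"
  proof (rule ccontr)
    fix j assume j: "?P j" "j \<noteq> i"
    hence "f i < f j \<or> (f i = f j \<and> prio j < prio i)" using i by blast
    moreover have "f j < f i \<or> (f j = f i \<and> prio i < prio j)" using i j by blast
    ultimately show False by linarith
  qed
  have "top prio f A = i" unfolding top_def by (rule the_equality[of ?P i, OF i u])
  have "\<forall>k\<in>A. f k \<le> f i"
  proof
    fix k assume k: "k \<in> A"
    show "f k \<le> f i"
    proof (cases "k = i")
      case False
      hence "f k < f i \<or> (f k = f i \<and> prio i < prio k)" using i k by simp
      thus ?thesis by auto
    qed simp
  qed
  thus ?thesis using i \<open>top prio f A = i\<close> by simp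
qed

theorem claim2:
  fixes n m :: nat and p :: "nat \<Rightarrow> real" and v :: "nat \<Rightarrow> nat \<Rightarrow> real"
    and prio :: "nat \<Rightarrow> nat" and Sig :: "nat set" and \<phi> :: "nat \<Rightarrow> nat \<Rightarrow> real" and S :: nat
  assumes "n \<ge> 2"
    and "\<forall>j<m. 0 \<le> p j" and "(\<Sum>j<m. p j) = 1"
    and "\<forall>i<n. \<forall>j<m. 0 \<le> v i j"
    and "inj_on prio {..<n}"
    and "optimal n m prio p v Sig \<phi>"
    and "S \<in> Sig"
    and "rev_sig n m prio p v \<phi> S > (\<Sum>j\<in>supp m \<phi> S. \<phi> j S * rev_item n prio p v j)"
  shows "w1 n m prio p v \<phi> S \<in> w1_item n prio p v ` supp m \<phi> S
       \<and> w2 n m prio p v \<phi> S \<in> w1_item n prio p v ` supp m \<phi> S"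
proof -
  have phinn: "\<And>j. j < m \<Longrightarrow> 0 \<le> \<phi> j S"
    using assms(6,7) unfolding optimal_def scheme_def by auto
  have inj2: "\<And>X. inj_on prio ({..<n} - X)" using assms(5) by (rule inj_on_subset) blast
  let ?w1 = "w1 n m prio p v \<phi> S" and ?w2 = "w2 n m prio p v \<phi> S"
  let ?val = "sigval m p v \<phi> S"
  have T1: "?w1 \<in> {..<n} \<and> (\<forall>k\<in>{..<n}. ?val k \<le> ?val ?w1)"
    unfolding w1_def by (rule top_props) (use assms(1,5) in \<open>auto simp: lessThan_empty_iff\<close>)
  have ne: "{..<n} - {?w1} \<noteq> {}"
  proof -
    have "card ({..<n} - {?w1}) = n - 1" using T1 by simp
    moreover have "n - 1 \<noteq> 0" using assms(1) by simp
    ultimately show ?thesis by (metis card.empty)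
  qed
  have T2: "?w2 \<in> {..<n} - {?w1} \<and> (\<forall>k\<in>{..<n} - {?w1}. ?val k \<le> ?val ?w2)"
    unfolding w2_def by (rule top_props) (use ne inj2 in auto)
  have revS: "rev_sig n m prio p v \<phi> S = ?val ?w2"
    unfolding rev_sig_def sigval_def by (simp add: mult.commute)
  have key: "\<And>b. b < n \<Longrightarrow> b \<notin> w1_item n prio p v ` supp m \<phi> S \<Longrightarrow>
      ?val b \<le> (\<Sum>j\<in>supp m \<phi> S. \<phi> j S * rev_item n prio p v j)"
  proof -
    fix b assume b: "b < n" "b \<notin> w1_item n prio p v ` supp m \<phi> S"
    have "?val b = (\<Sum>j\<in>supp m \<phi> S. \<phi> j S * psi p v b j)"
    proof -
      have "?val b = (\<Sum>j<m. \<phi> j S * psi p v b j)"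
        unfolding sigval_def by (simp add: mult.commute)
      also have "\<dots> = (\<Sum>j\<in>supp m \<phi> S. \<phi> j S * psi p v b j)"
      proof (rule sum.mono_neutral_right)
        show "finite {..<m}" by simp
        show "supp m \<phi> S \<subseteq> {..<m}" unfolding supp_def by auto
        show "\<forall>i\<in>{..<m} - supp m \<phi> S. \<phi> i S * psi p v b i = 0"
          using phinn unfolding supp_def by force
      qed
      finally show ?thesis .
    qed
    also have "\<dots> \<le> (\<Sum>j\<in>supp m \<phi> S. \<phi> j S * rev_item n prio p v j)"
    proof (rule sum_mono)
      fix j assume j: "j \<in> supp m \<phi> S"
      let ?f = "\<lambda>i. psi p v i j"
      have I1: "w1_item n prio p v j \<in> {..<n}"
        unfolding w1_item_def using assms(1,5) top_props[of "{..<n}" prio ?f] by (auto simp: lessThan_empty_iff)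
      have ne': "{..<n} - {w1_item n prio p v j} \<noteq> {}"
      proof -
        have "card ({..<n} - {w1_item n prio p v j}) = n - 1" using I1 by simp
        moreover have "n - 1 \<noteq> 0" using assms(1) by simp
    ultimately show ?thesis by (metis card.empty)
      qed
      have I2: "\<forall>k\<in>{..<n} - {w1_item n prio p v j}. ?f k \<le> ?f (w2_item n prio p v j)"
        unfolding w2_item_def using top_props[OF _ ne' inj2, of ?f] by auto
      have "b \<noteq> w1_item n prio p v j" using b j by auto
      hence "psi p v b j \<le> rev_item n prio p v j"
        using I2 b unfolding rev_item_def by auto
      moreover have "0 \<le> \<phi> j S" using j unfolding supp_def by auto
      ultimately show "\<phi> j S * psi p v b j \<le> \<phi> j S * rev_item n prio p v j"
        by (simp add: mult_left_mono)
    qed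
    finally show "?val b \<le> (\<Sum>j\<in>supp m \<phi> S. \<phi> j S * rev_item n prio p v j)" .
  qed
  have "?val ?w2 \<le> ?val ?w1" using T1 T2 by auto
  have R: "?val ?w2 > (\<Sum>j\<in>supp m \<phi> S. \<phi> j S * rev_item n prio p v j)"
    using assms(8) revS by simp
  show ?thesis
  proof (intro conjI)
    show "?w1 \<in> w1_item n prio p v ` supp m \<phi> S"
    proof (rule ccontr)
      assume nin: "?w1 \<notin> w1_item n prio p v ` supp m \<phi> S"
      have "?w1 < n" using T1 by simp
      note key[OF this nin]
      thus False using R \<open>?val ?w2 \<le> ?val ?w1\<close> by linarith
    qed
    show "?w2 \<in> w1_item n prio p v ` supp m \<phi> S"
    proof (rule ccontr)
      assume nin: "?w2 \<notin> w1_item n prio p v ` supp m \<phi> S"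
      have "?w2 < n" using T2 by simp
      note key[OF this nin]
      thus False using R by linarith
    qed
  qed
qed

end
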